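(* Let $\alpha\in[0,1]$ and let $\mathbf{d}'$ be a delay function that is $\alpha$-bounded by a delay function $\mathbf{d}$. If $\alpha\le\frac{1}{2\cdot\mathrm{CB}(\#,\mathbf{d})\cdot|S'|}$, then $$E_{\mathcal{M}(\mathbf{d}')}\le E_{\mathcal{M}(\mathbf{d})}+2\cdot\alpha\cdot\mathrm{CB}(\#,\mathbf{d})\cdot\big(1+\mathrm{CB}(c,\mathbf{d})\cdot|S'|\big).$$
   Context: $C=(S,\lambda,\mathrm{P},S_{fd},\mathrm{F},s_{in})$ is a fdCTMC structure ($S$ finite, $\lambda>0$, $\mathrm{P}\in\mathbb{R}_{\ge0}^{S\times S}$, $\mathrm{F}\in\mathbb{R}_{\ge0}^{S_{fd}\times S}$ stochastic) with a cost structure $(G,\mathcal{R},\mathcal{I}_{\mathrm{P}},\mathcal{I}_{\mathrm{F}})$, $\mathcal{R}(s)>0$ for all $s$. For a delay function $\mathbf{d}:S_{fd}\to\mathbb{R}_{>0}$, $C(\mathbf{d})$ evolves from $(s_i,d_i)$ ($d_0=\mathbf{d}(s_{in})$ or $\infty$) by sampling an $\mathrm{Exp}(\lambda)$ time $t_i$; if $t_i<d_i$, $s_{i+1}\sim\mathrm{P}(s_i,\cdot)$, $d_{i+1}=d_i-t_i$ if $s_i,s_{i+1}\in S_{fd}$, $\mathbf{d}(s_{i+1})$ if $s_{i+1}\in S_{fd}\not\ni s_i$, $\infty$ if $s_{i+1}\notin S_{fd}$; otherwise $t_i=d_i$, $s_{i+1}\sim\mathrm{F}(s_i,\cdot)$,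 $d_{i+1}=\mathbf{d}(s_{i+1})$ or $\infty$. The cost of a run is $\sum_{i<n}(t_i\mathcal{R}(s_i)+I_i)$ up to the first $n>0$ with $s_n\in G$ ($I_i$ the $\mathcal{I}_{\mathrm{P}}$/$\mathcal{I}_{\mathrm{F}}$ impulse of the transition; $\infty$ if $G$ is never reached). Standing assumption: $S_{fd}=S^{reset}\uplus S^{keep}$ where $S^{reset}$ are the states entered by exp-delay transitions from $S\setminus S_{fd}$ or by fixed-delay transitions and $S^{keep}$ those entered by exp-delay transitions from $S_{fd}$; $s_{in}\in S^{reset}$ if $s_{in}\in S_{fd}$. $S'=S^{reset}\cup(S\setminus S_{fd})\cup G$. DTMDP $\mathcal{M}$: vertices $S'$, goal vertices $G$, actions $\mathbb{R}_{>0}$ enabled in $S^{reset}$ and $\infty$ enabled in $S\setminus S_{fd}$; for action $d$ in $s$, $T(s,d)(s')$ is the probability, in $C$ started in $s$ with delay $d$ set in $s$, that the first $S'$-state visited after at least one transition is $s'$, and $c(s,d)$ is the expected cost accumulated until then. Delay functions are memoryless strategies of $\mathcal{M}$; $\mathcal{M}[s]$ is $\mathcal{M}$ started in $s$; for a one-step cost function $\$$ on actions, $E^{\$}_{\mathcal{M}[s](\mathbf{d})}$ is the expected accumulated $\$$ before reaching $G$; $E_{\mathcal{M}(\mathbf{d})}=E^{c}_{\mathcal{M}[s_{in}](\mathbf{d})}$; $\mathrm{CB}(\$,\mathbf{d})=\max_{s\in S'}E^{\$}_{\mathcal{M}[s](\mathbf{d})}$; $\#$ assigns $1$ to every action. A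 delay function $\mathbf{d}^\star$ is $\alpha$-bounded by $\mathbf{d}$ if for all $s,t\in S'$: $|T(s,\mathbf{d}^\star(s))(t)-T(s,\mathbf{d}(s))(t)|\le\alpha$, $c(s,\mathbf{d}^\star(s))-c(s,\mathbf{d}(s))\le\alpha$, and $T(s,\mathbf{d}(s))(t)=0$ iff $T(s,\mathbf{d}^\star(s))(t)=0$. *)

theory Defs
  imports "HOL-Analysis.Analysis"
begin

text \<open>A DTMDP (as produced from the fdCTMC): finite vertex set V (= S'), goal
vertices G, enabled actions A s, transition probabilities T s a t and one-step
costs c s a. Only the properties of the DTMDP M that the lemma refers to are
assumed.\<close>

definition dtmdp ::
  "'v set \<Rightarrow> 'v set \<Rightarrow> ('v \<Rightarrow> 'a set) \<Rightarrow> ('v \<Rightarrow> 'a \<Rightarrow> 'v \<Rightarrow> real) \<Rightarrow> ('v \<Rightarrow> 'a \<Rightarrow> real) \<Rightarrow> bool" where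
  "dtmdp V G A T c \<longleftrightarrow> finite V \<and> G \<subseteq> V \<and>
     (\<forall>s\<in>V - G. \<forall>a\<in>A s. (\<forall>t. 0 \<le> T s a t) \<and> (\<forall>t. t \<notin> V \<longrightarrow> T s a t = 0) \<and>
        (\<Sum>t\<in>V. T s a t) = 1 \<and> 0 \<le> c s a)"

text \<open>Memoryless strategy (delay function): picks an enabled action in every non-goal vertex.\<close>
definition strategy :: "'v set \<Rightarrow> 'v set \<Rightarrow> ('v \<Rightarrow> 'a set) \<Rightarrow> ('v \<Rightarrow> 'a) \<Rightarrow> bool" where
  "strategy V G A d \<longleftrightarrow> (\<forall>s\<in>V - G. d s \<in> A s)"

text \<open>reach V G T d n s t: probability, in the Markov chain induced by d started in s,
of being in t after n steps while all of the vertices at steps 0..n-1 are not in G.\<close>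
fun reach :: "'v set \<Rightarrow> 'v set \<Rightarrow> ('v \<Rightarrow> 'a \<Rightarrow> 'v \<Rightarrow> real) \<Rightarrow> ('v \<Rightarrow> 'a) \<Rightarrow> nat \<Rightarrow> 'v \<Rightarrow> 'v \<Rightarrow> real" where
  "reach V G T d 0 s t = (if t = s then 1 else 0)"
| "reach V G T d (Suc n) s t = (\<Sum>u\<in>V - G. reach V G T d n s u * T u (d u) t)"

text \<open>E^cost_{M[s](d)}: expected accumulated one-step cost before reaching G.\<close>
definition expcost :: "'v set \<Rightarrow> 'v set \<Rightarrow> ('v \<Rightarrow> 'a \<Rightarrow> 'v \<Rightarrow> real) \<Rightarrow> ('v \<Rightarrow> 'a) \<Rightarrow> ('v \<Rightarrow> 'a \<Rightarrow> real) \<Rightarrow> 'v \<Rightarrow> ennreal" where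
  "expcost V G T d cost s = (\<Sum>n. \<Sum>t\<in>V - G. ennreal (reach V G T d n s t * cost t (d t)))"

definition CB :: "'v set \<Rightarrow> 'v set \<Rightarrow> ('v \<Rightarrow> 'a \<Rightarrow> 'v \<Rightarrow> real) \<Rightarrow> ('v \<Rightarrow> 'a \<Rightarrow> real) \<Rightarrow> ('v \<Rightarrow> 'a) \<Rightarrow> ennreal" where
  "CB V G T cost d = Max ((\<lambda>s. expcost V G T d cost s) ` V)"

text \<open>The cost function # assigning 1 to every action.\<close>
definition count_cost :: "'v \<Rightarrow> 'a \<Rightarrow> real" where
  "count_cost s a = 1"

definition alpha_bounded ::
  "'v set \<Rightarrow> ('v \<Rightarrow> 'a \<Rightarrow> 'v \<Rightarrow> real) \<Rightarrow> ('v \<Rightarrow> 'a \<Rightarrow> real) \<Rightarrow> real \<Rightarrow> ('v \<Rightarrow> 'a) \<Rightarrow> ('v \<Rightarrow> 'a) \<Rightarrow> bool" where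
  "alpha_bounded V T c \<alpha> d' d \<longleftrightarrow> (\<forall>s\<in>V. \<forall>t\<in>V.
      \<bar>T s (d' s) t - T s (d s) t\<bar> \<le> \<alpha> \<and> c s (d' s) - c s (d s) \<le> \<alpha> \<and>
      (T s (d s) t = 0 \<longleftrightarrow> T s (d' s) t = 0))"

end

theory Submission imports Defs begin

lemma T_nonneg: "dtmdp V G A T c \<Longrightarrow> strategy V G A d \<Longrightarrow> u \<in> V - G \<Longrightarrow> 0 \<le> T u (d u) t"
  unfolding dtmdp_def strategy_def by blast

lemma T_out: "dtmdp V G A T c \<Longrightarrow> strategy V G A d \<Longrightarrow> u \<in> V - G \<Longrightarrow> t \<notin> V \<Longrightarrow> T u (d u) t = 0"
  unfolding dtmdp_def strategy_def by blast

lemma c_nonneg: "dtmdp V G A T c \<Longrightarrow> strategy V G A d \<Longrightarrow> u \<in> V - G \<Longrightarrow> 0 \<le> c u (d u)"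
  unfolding dtmdp_def strategy_def by blast

lemma reach_nonneg:
  assumes "dtmdp V G A T c" "strategy V G A d"
  shows "0 \<le> reach V G T d n s t"
  by (induction n arbitrary: t) (auto intro!: sum_nonneg mult_nonneg_nonneg T_nonneg[OF assms])

lemma reach_Suc_left:
  assumes D: "dtmdp V G A T c" and S: "strategy V G A d"
  shows "reach V G T d (Suc n) s t =
    (if s \<in> V - G then (\<Sum>u\<in>V. T s (d s) u * reach V G T d n u t) else 0)"
proof (induction n arbitrary: t)
  case 0
  have fin: "finite V" using D unfolding dtmdp_def by auto
  show ?case
  proof (cases "s \<in> V - G")
    case True
    have "(\<Sum>u\<in>V. T s (d s) u * (if t = u then 1 else 0)) = (if t \<in> V then T s (d s) t else 0)"
      using fin by (simp add: if_distrib[of "\<lambda>x. _ * x"] sum.delta cong: if_cong)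
    also have "\<dots> = T s (d s) t" using T_out[OF D S True] by auto
    finally show ?thesis using True fin
      by (simp add: if_distrib[of "\<lambda>x. x * _"] sum.delta' cong: if_cong)
  next
    case False
    have "(\<Sum>u\<in>V - G. (if u = s then 1 else 0) * T u (d u) t) = 0"
      using False by (intro sum.neutral) auto
    then show ?thesis using False by auto
  qed
next
  case (Suc n)
  show ?case
  proof (cases "s \<in> V - G")
    case True
    have "reach V G T d (Suc (Suc n)) s t = (\<Sum>w\<in>V - G. (\<Sum>u\<in>V. T s (d s) u * reach V G T d n u w) * T w (d w) t)"
      using Suc True by simp
    also have "\<dots> = (\<Sum>u\<in>V. T s (d s) u * (\<Sum>w\<in>V - G. reach V G T d n u w * T w (d w) t))"
      by (simp add: sum_distrib_left sum_distrib_right sum.swap[of _ "V - G"] mult.assoc)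
    finally show ?thesis using True by simp
  next
    case False
    have z: "\<And>w. reach V G T d (Suc n) s w = 0" using Suc.IH False by auto
    have "reach V G T d (Suc (Suc n)) s t = (\<Sum>w\<in>V-G. reach V G T d (Suc n) s w * T w (d w) t)"
      by (rule reach.simps(2))
    then show ?thesis using False by (auto simp add: z simp del: reach.simps)
  qed
qed

lemma X_Suc:
  assumes D: "dtmdp V G A T c" and S: "strategy V G A d"
  shows "(\<Sum>t\<in>V - G. reach V G T d (Suc n) s t * f t (d t)) =
    (if s \<in> V - G then \<Sum>u\<in>V. T s (d s) u * (\<Sum>t\<in>V - G. reach V G T d n u t * f t (d t)) else 0)"
proof (cases "s \<in> V - G")
  case True
  then show ?thesis unfolding reach_Suc_left[OF D S]
    by (simp add: sum_distrib_left sum_distrib_right sum.swap[of _ "V-G"] mult.assoc del: reach.simps)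
next
  case False
  then show ?thesis unfolding reach_Suc_left[OF D S] by auto
qed

lemma X0:
  assumes D: "dtmdp V G A T c"
  shows "(\<Sum>t\<in>V - G. reach V G T d 0 s t * f t (d t)) = (if s \<in> V - G then f s (d s) else 0)"
proof -
  have fin: "finite (V - G)" using D unfolding dtmdp_def by auto
  show ?thesis using fin by (simp add: if_distrib[of "\<lambda>x. x * _"] cong: if_cong)
qed

lemma X_nonneg:
  assumes D: "dtmdp V G A T c" and S: "strategy V G A d" and f: "\<forall>u\<in>V-G. 0 \<le> f u (d u)"
  shows "0 \<le> (\<Sum>t\<in>V - G. reach V G T d n s t * f t (d t))"
  using f by (intro sum_nonneg mult_nonneg_nonneg reach_nonneg[OF D S]) auto

lemma expcost_alt:
  assumes D: "dtmdp V G A T c" and S: "strategy V G A d" and f: "\<forall>u\<in>V-G. 0 \<le> f u (d u)"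
  shows "expcost V G T d f s = (\<Sum>n. ennreal (\<Sum>t\<in>V - G. reach V G T d n s t * f t (d t)))"
  unfolding expcost_def using f reach_nonneg[OF D S]
  by (subst sum_ennreal) (auto intro!: mult_nonneg_nonneg)

lemma expcost_eq:
  assumes D: "dtmdp V G A T c" and S: "strategy V G A d" and f: "\<forall>u\<in>V-G. 0 \<le> f u (d u)"
  shows "expcost V G T d f s = (if s \<in> V - G then ennreal (f s (d s)) +
      (\<Sum>u\<in>V. ennreal (T s (d s) u) * expcost V G T d f u) else 0)"
proof -
  define X where "X n u = (\<Sum>t\<in>V - G. reach V G T d n u t * f t (d t))" for n u
  have Xn: "0 \<le> X n u" for n u unfolding X_def using X_nonneg[where f=f, OF D S f] by blast
  have E: "expcost V G T d f u = (\<Sum>n. ennreal (X n u))" for u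
    unfolding X_def by (rule expcost_alt[where f=f, OF D S f])
  have "(\<lambda>n. ennreal (X (Suc n) s)) sums (\<Sum>n. ennreal (X (Suc n) s))"
    by (rule summable_sums[OF summableI])
  from sums_Suc[OF this] have sp: "(\<Sum>n. ennreal (X n s)) = (\<Sum>n. ennreal (X (Suc n) s)) + ennreal (X 0 s)"
    by (rule sums_unique[symmetric])
  show ?thesis
  proof (cases "s \<in> V - G")
    case True
    have "ennreal (X (Suc n) s) = (\<Sum>u\<in>V. ennreal (T s (d s) u) * ennreal (X n u))" for n
    proof -
      have "ennreal (X (Suc n) s) = ennreal (\<Sum>u\<in>V. T s (d s) u * X n u)"
        unfolding X_def using X_Suc[OF D S, of n s f] True by simp
      also have "\<dots> = (\<Sum>u\<in>V. ennreal (T s (d s) u * X n u))"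
        using T_nonneg[OF D S True] Xn by (subst sum_ennreal) auto
      also have "\<dots> = (\<Sum>u\<in>V. ennreal (T s (d s) u) * ennreal (X n u))"
        using T_nonneg[OF D S True] Xn by (simp add: ennreal_mult)
      finally show ?thesis .
    qed
    then have "(\<Sum>n. ennreal (X (Suc n) s)) = (\<Sum>u\<in>V. ennreal (T s (d s) u) * expcost V G T d f u)"
      by (simp add: E suminf_sum[OF summableI])
    moreover have "X 0 s = f s (d s)" unfolding X_def using X0[OF D, of d s f] True by simp
    ultimately show ?thesis using E sp True by (simp add: add.commute)
  next
    case False
    have "X (Suc n) s = 0" for n unfolding X_def using X_Suc[OF D S, of n s f] False by (auto simp del: reach.simps)
    moreover have "X 0 s = 0" unfolding X_def using X0[OF D, of d s f] False by auto
    ultimately show ?thesis using E sp False by auto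
  qed
qed

lemma lyap:
  assumes D: "dtmdp V G A T c" and S: "strategy V G A d" and f: "\<forall>u\<in>V-G. 0 \<le> f u (d u)"
    and h0: "\<forall>u\<in>V. 0 \<le> h u"
    and hL: "\<forall>u\<in>V-G. f u (d u) + (\<Sum>w\<in>V. T u (d u) w * h w) \<le> h u"
    and s: "s \<in> V"
  shows "expcost V G T d f s \<le> ennreal (h s)"
proof -
  define X where "X n u = (\<Sum>t\<in>V - G. reach V G T d n u t * f t (d t))" for n u
  have Xn: "0 \<le> X n u" for n u unfolding X_def using X_nonneg[where f=f, OF D S f] by blast
  have P: "\<forall>u\<in>V. (\<Sum>k<n. X k u) \<le> h u" for n
  proof (induction n)
    case 0
    then show ?case using h0 by simp
  next
    case (Suc n)
    show ?case
    proof
      fix u assume u: "u \<in> V"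
      have "(\<Sum>k<Suc n. X k u) = X 0 u + (\<Sum>k<n. X (Suc k) u)"
        by (rule sum.lessThan_Suc_shift)
      show "(\<Sum>k<Suc n. X k u) \<le> h u"
      proof (cases "u \<in> V - G")
        case True
        have "(\<Sum>k<n. X (Suc k) u) = (\<Sum>k<n. \<Sum>w\<in>V. T u (d u) w * X k w)"
          unfolding X_def using X_Suc[OF D S, of _ u f] True by (simp del: reach.simps)
        also have "\<dots> = (\<Sum>w\<in>V. T u (d u) w * (\<Sum>k<n. X k w))"
          by (simp add: sum_distrib_left sum.swap[of _ "{..<n}"])
        also have "\<dots> \<le> (\<Sum>w\<in>V. T u (d u) w * h w)"
          using Suc.IH T_nonneg[OF D S True] by (intro sum_mono mult_left_mono) auto
        finally have "(\<Sum>k<Suc n. X k u) \<le> f u (d u) + (\<Sum>w\<in>V. T u (d u) w * h w)"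
          using `(\<Sum>k<Suc n. X k u) = X 0 u + (\<Sum>k<n. X (Suc k) u)` X0[OF D, of d u f] True
          unfolding X_def by auto
        then show ?thesis using hL True by force
      next
        case False
        have "X (Suc k) u = 0" for k
          unfolding X_def using X_Suc[OF D S, of k u f] False by (auto simp del: reach.simps)
        moreover have "X 0 u = 0" unfolding X_def using X0[OF D, of d u f] False by auto
        ultimately show ?thesis using `(\<Sum>k<Suc n. X k u) = X 0 u + (\<Sum>k<n. X (Suc k) u)` h0 u
          by simp
      qed
    qed
  qed
  have E: "expcost V G T d f s = (\<Sum>n. ennreal (X n s))"
    unfolding X_def by (rule expcost_alt[where f=f, OF D S f])
  have "(\<Sum>n. ennreal (X n s)) \<le> ennreal (h s)"
  proof (rule suminf_le_const[OF summableI])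
    fix n
    have "(\<Sum>k<n. ennreal (X k s)) = ennreal (\<Sum>k<n. X k s)" using Xn by (simp add: sum_ennreal)
    also have "\<dots> \<le> ennreal (h s)" using P s by (intro ennreal_leI) auto
    finally show "(\<Sum>k<n. ennreal (X k s)) \<le> ennreal (h s)" .
  qed
  then show ?thesis using E by simp
qed

lemma CB_ge: "dtmdp V G A T c \<Longrightarrow> u \<in> V \<Longrightarrow> expcost V G T d f u \<le> CB V G T f d"
  unfolding CB_def dtmdp_def by (intro Max_ge) auto

lemma reach_eq0:
  assumes D: "dtmdp V G A T c" and S: "strategy V G A d" and S': "strategy V G A d'"
    and ab: "alpha_bounded V T c 0 d' d"
  shows "reach V G T d' n s t = reach V G T d n s t"
proof (induction n arbitrary: t)
  case 0 then show ?case by simp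
next
  case (Suc n)
  have "T u (d' u) t = T u (d u) t" if u: "u \<in> V - G" for u
  proof (cases "t \<in> V")
    case True then show ?thesis using ab u unfolding alpha_bounded_def by force
  next
    case False then show ?thesis using T_out[OF D S u] T_out[OF D S' u] by simp
  qed
  then show ?case using Suc by simp
qed

lemma real_eq:
  assumes D: "dtmdp V G A T c" and S: "strategy V G A d" and f: "\<forall>u\<in>V-G. 0 \<le> f u (d u)"
    and fin: "\<forall>u\<in>V. expcost V G T d f u \<noteq> top" and s: "s \<in> V - G"
  shows "enn2real (expcost V G T d f s) = f s (d s) + (\<Sum>u\<in>V. T s (d s) u * enn2real (expcost V G T d f u))"
proof -
  define r where "r u = enn2real (expcost V G T d f u)" for u
  have r: "expcost V G T d f u = ennreal (r u)" if "u \<in> V" for u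
    using fin that unfolding r_def by (simp add: less_top)
  have rn: "0 \<le> r u" for u unfolding r_def by simp
  have Tn: "0 \<le> T s (d s) u" for u using T_nonneg[OF D S s] .
  have "expcost V G T d f s = ennreal (f s (d s)) + (\<Sum>u\<in>V. ennreal (T s (d s) u) * ennreal (r u))"
    using expcost_eq[where f=f, OF D S f, of s] s r by simp
  also have "\<dots> = ennreal (f s (d s)) + (\<Sum>u\<in>V. ennreal (T s (d s) u * r u))"
    using Tn rn by (simp add: ennreal_mult)
  also have "\<dots> = ennreal (f s (d s) + (\<Sum>u\<in>V. T s (d s) u * r u))"
  proof -
    have sn: "0 \<le> (\<Sum>u\<in>V. T s (d s) u * r u)" using Tn rn by (intro sum_nonneg) auto
    have "(\<Sum>u\<in>V. ennreal (T s (d s) u * r u)) = ennreal (\<Sum>u\<in>V. T s (d s) u * r u)"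
      using Tn rn by (intro sum_ennreal) auto
    then show ?thesis using sn f s by (simp add: ennreal_plus)
  qed
  finally have eq: "expcost V G T d f s = ennreal (f s (d s) + (\<Sum>u\<in>V. T s (d s) u * r u))" .
  have X0: "0 \<le> f s (d s) + (\<Sum>u\<in>V. T s (d s) u * r u)"
    using Tn rn f s by (auto intro!: add_nonneg_nonneg sum_nonneg)
  have "r s = f s (d s) + (\<Sum>u\<in>V. T s (d s) u * r u)"
    by (simp only: r_def[of s] eq enn2real_ennreal[OF X0])
  then show ?thesis unfolding r_def .
qed

theorem lemma2:
  fixes V G :: "'v set" and A :: "'v \<Rightarrow> 'a set" and T :: "'v \<Rightarrow> 'a \<Rightarrow> 'v \<Rightarrow> real"
    and c :: "'v \<Rightarrow> 'a \<Rightarrow> real" and s_in :: 'v and d d' :: "'v \<Rightarrow> 'a" and \<alpha> :: real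
  assumes "dtmdp V G A T c" and "s_in \<in> V"
    and "strategy V G A d" and "strategy V G A d'"
    and "0 \<le> \<alpha>" and "\<alpha> \<le> 1"
    and "alpha_bounded V T c \<alpha> d' d"
    and "ennreal \<alpha> \<le> 1 / (2 * CB V G T count_cost d * of_nat (card V))"
  shows "expcost V G T d' c s_in \<le> expcost V G T d c s_in
           + 2 * ennreal \<alpha> * CB V G T count_cost d * (1 + CB V G T c d * of_nat (card V))"
proof -
  note D = assms(1) and sin = assms(2) and S = assms(3) and S' = assms(4) and ab = assms(7)
    and hyp = assms(8)
  have fin: "finite V" using D unfolding dtmdp_def by auto
  have cn: "\<forall>u\<in>V-G. 0 \<le> c u (d u)" using c_nonneg[OF D S] by blast
  have cn': "\<forall>u\<in>V-G. 0 \<le> c u (d' u)" using c_nonneg[OF D S'] by blast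
  have kn: "\<forall>u\<in>V-G. 0 \<le> count_cost u (d u)" by (simp add: count_cost_def)
  show ?thesis
  proof (cases "V - G = {}")
    case True
    then have "expcost V G T d' c s_in = 0" using expcost_eq[where f=c, OF D S' cn'] by auto
    then show ?thesis by simp
  next
    case nonempty: False
    show ?thesis
    proof (cases "\<alpha> = 0")
      case True
      have "expcost V G T d' c s_in \<le> expcost V G T d c s_in"
        unfolding expcost_def
      proof (intro suminf_le[OF _ summableI summableI] sum_mono ennreal_leI)
        fix n t assume t: "t \<in> V - G"
        have "c t (d' t) \<le> c t (d t)" using ab t True unfolding alpha_bounded_def by force
        then show "reach V G T d' n s_in t * c t (d' t) \<le> reach V G T d n s_in t * c t (d t)"
          using reach_eq0[OF D S S', of n s_in t] ab True reach_nonneg[OF D S]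
          by (auto intro: mult_left_mono)
      qed
      then show ?thesis by (simp add: add_increasing2)
    next
      case apos: False
      define K where "K = CB V G T count_cost d"
      define C where "C = CB V G T c d"
      define N where "N = card V"
      have Npos: "N > 0" using fin sin unfolding N_def by (auto simp: card_gt_0_iff)
      obtain s0 where s0: "s0 \<in> V - G" using nonempty by auto
      have "expcost V G T d count_cost s0 \<ge> 1"
        using expcost_eq[where f=count_cost, OF D S kn, of s0] s0 by (simp add: count_cost_def)
      moreover have "expcost V G T d count_cost s0 \<le> K" unfolding K_def using s0 CB_ge[OF D] by auto
      ultimately have K1: "1 \<le> K" by simp
      have Ktop: "K \<noteq> top"
      proof
        assume "K = top"
        then have "2 * K * of_nat N = top" using Npos by (simp add: ennreal_mult_eq_top_iff)
        then have "ennreal \<alpha> \<le> 0" using hyp unfolding K_def N_def by simp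
        then show False using apos assms(5) by simp
      qed
      obtain k where k: "K = ennreal k" "0 \<le> k" using Ktop by (cases K) auto
      have k1: "1 \<le> k" using K1 k by simp
      have e1: "2 * ennreal k * of_nat N = ennreal (2 * k * N)"
        using k by (simp add: ennreal_of_nat_eq_real_of_nat ennreal_mult' ennreal_mult'')
      have e2: "1 / ennreal (2 * k * N) = ennreal (1 / (2 * k * N))"
        using divide_ennreal[of 1 "2 * k * N"] k1 Npos by simp
      have "ennreal \<alpha> \<le> ennreal (1 / (2 * k * N))"
        using hyp unfolding K_def[symmetric] N_def[symmetric] k(1) e1 e2 .
      then have "\<alpha> \<le> 1 / (2 * k * N)" using k1 Npos by (simp add: ennreal_le_iff)
      then have akN: "\<alpha> * k * N \<le> 1/2" using k1 Npos by (simp add: field_simps)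
      have Kge: "expcost V G T d count_cost u \<le> ennreal k" if "u \<in> V" for u
        using CB_ge[OF D that, of d count_cost] k unfolding K_def by simp
      show ?thesis
      proof (cases "C = top")
        case True
        have "2 * ennreal \<alpha> * K * (1 + C * of_nat N) = top"
          using True apos assms(5) K1 Npos by (auto simp: ennreal_mult_eq_top_iff)
        then show ?thesis unfolding K_def[symmetric] C_def[symmetric] N_def[symmetric] by simp
      next
        case False
        obtain cc where cc: "C = ennreal cc" "0 \<le> cc" using False by (cases C) auto
        have Cge: "expcost V G T d c u \<le> ennreal cc" if "u \<in> V" for u
          using CB_ge[OF D that, of d c] cc unfolding C_def by simp
        define e where "e u = enn2real (expcost V G T d c u)" for u
        define kv where "kv u = enn2real (expcost V G T d count_cost u)" for u
        have ntop_e: "\<forall>u\<in>V. expcost V G T d c u \<noteq> top"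
          using Cge by (metis ennreal_neq_top top_unique)
        have ntop_k: "\<forall>u\<in>V. expcost V G T d count_cost u \<noteq> top"
          using Kge by (metis ennreal_neq_top top_unique)
        have e_eq: "expcost V G T d c u = ennreal (e u)" if "u \<in> V" for u
          using ntop_e that unfolding e_def by (simp add: less_top)
        have kv_eq: "expcost V G T d count_cost u = ennreal (kv u)" if "u \<in> V" for u
          using ntop_k that unfolding kv_def by (simp add: less_top)
        have e0: "0 \<le> e u" for u unfolding e_def by simp
        have kv0: "0 \<le> kv u" for u unfolding kv_def by simp
        have ecc: "e u \<le> cc" if "u \<in> V" for u using Cge[OF that] e_eq[OF that] cc by simp
        have kvk: "kv u \<le> k" if "u \<in> V" for u using Kge[OF that] kv_eq[OF that] k by simp
        have erec: "e u = c u (d u) + (\<Sum>w\<in>V. T u (d u) w * e w)" if "u \<in> V - G" for u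
          using real_eq[where f=c, OF D S cn ntop_e that] unfolding e_def .
        have krec: "kv u = 1 + (\<Sum>w\<in>V. T u (d u) w * kv w)" if "u \<in> V - G" for u
          using real_eq[where f=count_cost, OF D S kn ntop_k that] unfolding kv_def
          by (simp add: count_cost_def)
        define \<gamma> where "\<gamma> = 2 * \<alpha> * (1 + N * cc)"
        have g0: "0 \<le> \<gamma>" unfolding \<gamma>_def using assms(5) cc by simp
        define h where "h u = e u + \<gamma> * kv u" for u
        have h0: "\<forall>u\<in>V. 0 \<le> h u" unfolding h_def using e0 kv0 g0 by simp
        have hL: "\<forall>u\<in>V-G. c u (d' u) + (\<Sum>w\<in>V. T u (d' u) w * h w) \<le> h u"
        proof
          fix u assume u: "u \<in> V - G"
          have abu: "\<And>w. w \<in> V \<Longrightarrow> \<bar>T u (d' u) w - T u (d u) w\<bar> \<le> \<alpha>"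
            "c u (d' u) - c u (d u) \<le> \<alpha>"
            using ab u unfolding alpha_bounded_def by auto
          have s1: "(\<Sum>w\<in>V. T u (d' u) w * e w) \<le> (\<Sum>w\<in>V. T u (d u) w * e w) + N * (\<alpha> * cc)"
          proof -
            have "(\<Sum>w\<in>V. T u (d' u) w * e w) - (\<Sum>w\<in>V. T u (d u) w * e w)
                = (\<Sum>w\<in>V. (T u (d' u) w - T u (d u) w) * e w)"
              by (simp add: sum_subtractf left_diff_distrib)
            also have "\<dots> \<le> (\<Sum>w\<in>V. \<alpha> * cc)"
            proof (rule sum_mono)
              fix w assume w: "w \<in> V"
              have "(T u (d' u) w - T u (d u) w) * e w \<le> \<bar>T u (d' u) w - T u (d u) w\<bar> * e w"
                using e0 by (intro mult_right_mono) auto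
              also have "\<dots> \<le> \<alpha> * cc" using abu(1)[OF w] ecc[OF w] e0 assms(5)
                by (intro mult_mono) auto
              finally show "(T u (d' u) w - T u (d u) w) * e w \<le> \<alpha> * cc" .
            qed
            finally show ?thesis unfolding N_def by simp
          qed
          have s2: "(\<Sum>w\<in>V. T u (d' u) w * kv w) \<le> (\<Sum>w\<in>V. T u (d u) w * kv w) + N * (\<alpha> * k)"
          proof -
            have "(\<Sum>w\<in>V. T u (d' u) w * kv w) - (\<Sum>w\<in>V. T u (d u) w * kv w)
                = (\<Sum>w\<in>V. (T u (d' u) w - T u (d u) w) * kv w)"
              by (simp add: sum_subtractf left_diff_distrib)
            also have "\<dots> \<le> (\<Sum>w\<in>V. \<alpha> * k)"
            proof (rule sum_mono)
              fix w assume w: "w \<in> V"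
              have "(T u (d' u) w - T u (d u) w) * kv w \<le> \<bar>T u (d' u) w - T u (d u) w\<bar> * kv w"
                using kv0 by (intro mult_right_mono) auto
              also have "\<dots> \<le> \<alpha> * k" using abu(1)[OF w] kvk[OF w] kv0 assms(5)
                by (intro mult_mono) auto
              finally show "(T u (d' u) w - T u (d u) w) * kv w \<le> \<alpha> * k" .
            qed
            finally show ?thesis unfolding N_def by simp
          qed
          have s3: "(\<Sum>w\<in>V. T u (d' u) w * h w) = (\<Sum>w\<in>V. T u (d' u) w * e w) + \<gamma> * (\<Sum>w\<in>V. T u (d' u) w * kv w)"
            unfolding h_def by (simp add: distrib_left sum.distrib sum_distrib_left algebra_simps)
          have s4: "\<gamma> * (N * (\<alpha> * k)) \<le> \<gamma> / 2"
            using akN g0 mult_left_mono[OF akN g0] by (simp add: algebra_simps)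
          have s5: "\<gamma> * (\<Sum>w\<in>V. T u (d' u) w * kv w) \<le> \<gamma> * ((\<Sum>w\<in>V. T u (d u) w * kv w) + N * (\<alpha> * k))"
            using s2 g0 by (rule mult_left_mono)
          have s6: "\<gamma> / 2 = \<alpha> + N * (\<alpha> * cc)" unfolding \<gamma>_def by (simp add: algebra_simps)
          show "c u (d' u) + (\<Sum>w\<in>V. T u (d' u) w * h w) \<le> h u"
            using s1 s3 s4 s5 s6 abu(2) erec[OF u] krec[OF u] unfolding h_def
            by (simp add: algebra_simps)
        qed
        have "expcost V G T d' c s_in \<le> ennreal (h s_in)"
          by (rule lyap[where f=c, OF D S' cn' h0 hL sin])
        also have "\<dots> \<le> ennreal (e s_in) + ennreal (\<gamma> * k)"
          unfolding h_def using e0 g0 kv0 kvk[OF sin]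
          by (simp add: ennreal_leI mult_left_mono)
        also have "ennreal (\<gamma> * k) = 2 * ennreal \<alpha> * K * (1 + C * of_nat N)"
          unfolding \<gamma>_def k cc using assms(5) cc k
          by (simp add: ennreal_of_nat_eq_real_of_nat ennreal_mult' ennreal_mult'' algebra_simps)
        finally show ?thesis
          unfolding K_def[symmetric] C_def[symmetric] N_def[symmetric] e_eq[OF sin] .
      qed
    qed
  qed
qed

end
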